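(* Let $\alpha(x)=a_1x^2+a_2x+a_3$ and $\beta(x)=b_1x^2+b_2x+b_3$ with $a_i,b_i\in\mathbb{R}$, $x\in\mathbb{R}$. Then the set $$V:=\{(\alpha(x),\beta(x)) : x\in\mathbb{R}\}+\mathbb{R}^2_+$$ is convex. *)

theory Defs
  imports "HOL-Analysis.Analysis"
begin

end

theory Submission
  imports Defs
begin

lemma quad_conv:
  fixes a1 a2 a3 x y t :: real
  assumes "a1 \<ge> 0" "0 \<le> t" "t \<le> 1"
  shows "a1*((1-t)*x+t*y)^2 + a2*((1-t)*x+t*y) + a3 \<le> (1-t)*(a1*x^2+a2*x+a3) + t*(a1*y^2+a2*y+a3)"
proof -
  have e: "(1-t)*(a1*x^2+a2*x+a3) + t*(a1*y^2+a2*y+a3) - (a1*((1-t)*x+t*y)^2 + a2*((1-t)*x+t*y) + a3)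
        = a1*(t*(1-t)*(x-y)^2)" by (simp add: algebra_simps power2_eq_square)
  have "a1*(t*(1-t)*(x-y)^2) \<ge> 0" using assms by simp
  then show ?thesis using e by linarith
qed

lemma quad_neg:
  fixes c2 c1 c0 z :: real
  assumes "c2 < 0" "\<bar>z\<bar> \<ge> 1" "\<bar>z\<bar> \<ge> (\<bar>c1\<bar>+\<bar>c0\<bar>)/(-c2)"
  shows "c2*z^2 + c1*z + c0 \<le> 0"
proof -
  have "c1*z + c0 \<le> \<bar>c1\<bar>*\<bar>z\<bar> + \<bar>c0\<bar>"
    by (metis abs_ge_self abs_mult add_mono)
  also have "\<dots> \<le> (\<bar>c1\<bar>+\<bar>c0\<bar>)*\<bar>z\<bar>"
    using assms(2) by (simp add: algebra_simps) (metis abs_ge_zero mult_left_mono mult.right_neutral)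
  also have "\<dots> \<le> ((-c2)*\<bar>z\<bar>)*\<bar>z\<bar>"
  proof -
    have "\<bar>c1\<bar>+\<bar>c0\<bar> \<le> (-c2)*\<bar>z\<bar>" using assms(3) pos_divide_le_eq[of "-c2" "\<bar>c1\<bar>+\<bar>c0\<bar>" "\<bar>z\<bar>"] assms(1)
      by (simp add: mult.commute)
    then show ?thesis using mult_right_mono[of "\<bar>c1\<bar>+\<bar>c0\<bar>" "(-c2)*\<bar>z\<bar>" "\<bar>z\<bar>"] by simp
  qed
  also have "\<dots> = - (c2*z^2)" by (simp add: power2_eq_square abs_mult_self_eq)
  finally show ?thesis by linarith
qed

lemma far:
  fixes a1 a2 a3 b1 b2 b3 A B x0 :: real
  assumes "a1 < 0" "b1 \<le> 0" "b1*x0^2+b2*x0+b3 \<le> B"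
  shows "\<exists>z. a1*z^2+a2*z+a3 \<le> A \<and> b1*z^2+b2*z+b3 \<le> B"
proof -
  define R where "R = max 1 (max ((\<bar>a2\<bar>+\<bar>a3-A\<bar>)/(-a1))
      (max (if b1 < 0 then (\<bar>b2\<bar>+\<bar>b3-B\<bar>)/(-b1) else 0) (if b2 = 0 then 0 else \<bar>b3-B\<bar>/\<bar>b2\<bar>)))"
  have R1: "R \<ge> 1" and R2: "R \<ge> (\<bar>a2\<bar>+\<bar>a3-A\<bar>)/(-a1)"
    and R3: "b1 < 0 \<Longrightarrow> R \<ge> (\<bar>b2\<bar>+\<bar>b3-B\<bar>)/(-b1)"
    and R4: "b2 \<noteq> 0 \<Longrightarrow> R \<ge> \<bar>b3-B\<bar>/\<bar>b2\<bar>" unfolding R_def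
    by (simp_all only: le_max_iff_disj if_True if_False) auto
  have A: "a1*z^2+a2*z+a3 \<le> A" if "\<bar>z\<bar> = R" for z
    using quad_neg[of a1 z a2 "a3-A"] assms(1) R1 R2 that by simp
  show ?thesis
  proof (cases "b1 < 0")
    case True
    have "b1*R^2+b2*R+(b3-B) \<le> 0" using quad_neg[of b1 R b2 "b3-B"] True R1 R3 by simp
    then show ?thesis using A[of R] R1 by (intro exI[of _ R]) auto
  next
    case False
    then have b1: "b1 = 0" using assms(2) by simp
    show ?thesis
    proof (cases "b2 = 0")
      case True
      then show ?thesis using A[of R] R1 b1 assms(3) by (intro exI[of _ R]) auto
    next
      case b2: False
      have k: "\<bar>b2\<bar>*R \<ge> \<bar>b3-B\<bar>" using R4[OF b2] b2 by (simp add: divide_le_eq mult.commute)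
      show ?thesis
      proof (cases "b2 > 0")
        case True
        then have "b2*(-R)+b3 \<le> B" using k by simp
        then show ?thesis using A[of "-R"] R1 b1 by (intro exI[of _ "-R"]) auto
      next
        case False
        then have "b2*R+b3 \<le> B" using k b2 by simp
        then show ?thesis using A[of R] R1 b1 by (intro exI[of _ R]) auto
      qed
    qed
  qed
qed

lemma mixed:
  fixes a1 a2 a3 b1 b2 b3 A B xt :: real
  assumes a1: "a1 > 0" and b1: "b1 < 0" and hA: "a1*xt^2+a2*xt+a3 \<le> A"
    and hB: "(b1*xt^2+b2*xt+b3) + (-b1/a1)*(a1*xt^2+a2*xt+a3) \<le> B + (-b1/a1)*A"
  shows "\<exists>z. a1*z^2+a2*z+a3 \<le> A \<and> b1*z^2+b2*z+b3 \<le> B"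
proof -
  define \<alpha> where "\<alpha> = (\<lambda>z::real. a1*z^2+a2*z+a3)"
  define \<beta> where "\<beta> = (\<lambda>z::real. b1*z^2+b2*z+b3)"
  define l where "l = -b1/a1"
  have l: "l > 0" using a1 b1 by (simp add: l_def divide_neg_pos)
  have lb: "b1 = - l * a1" using a1 by (simp add: l_def)
  define c where "c = b2 + l*a2"
  define d where "d = b3 + l*a3"
  have h: "\<beta> z + l * \<alpha> z = c*z + d" for z
    unfolding \<alpha>_def \<beta>_def c_def d_def lb by (simp add: algebra_simps)
  define m where "m = -a2/(2*a1)"
  have am: "\<alpha> (m+w) = \<alpha> m + a1*w^2" for w
    unfolding \<alpha>_def m_def using a1 by (simp add: field_simps power2_eq_square)
  define r where "r = sqrt ((A - \<alpha> m)/a1)"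
  have "\<alpha> xt = \<alpha> m + a1*(xt-m)^2" using am[of "xt-m"] by simp
  then have q: "a1*(xt-m)^2 \<le> A - \<alpha> m" using hA unfolding \<alpha>_def by simp
  have "a1*(xt-m)^2 \<ge> 0" using a1 by simp
  then have "A - \<alpha> m \<ge> 0" using q by linarith
  then have nn: "(A - \<alpha> m)/a1 \<ge> 0" using a1 by simp
  have r2: "a1 * r^2 = A - \<alpha> m" unfolding r_def real_sqrt_pow2[OF nn] using a1 by simp
  have r0: "r \<ge> 0" unfolding r_def using nn by simp
  have "(xt-m)^2 \<le> r^2" using q r2 a1 by (metis mult_le_cancel_left_pos)
  then have xr: "\<bar>xt-m\<bar> \<le> r" using r0 by (metis abs_of_nonneg power2_le_imp_le abs_ge_zero power2_abs)
  have Ap: "\<alpha> (m+r) = A" "\<alpha> (m-r) = A" using am[of r] am[of "-r"] r2 by simp_all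
  have "c*(m+r)+d \<le> c*xt+d \<or> c*(m-r)+d \<le> c*xt+d"
  proof (cases "c \<ge> 0")
    case True
    then have "c*(m-r) \<le> c*xt" using xr by (intro mult_left_mono) auto
    then show ?thesis by simp
  next
    case False
    then have "c*(m+r) \<le> c*xt" using xr by (intro mult_left_mono_neg) auto
    then show ?thesis by simp
  qed
  then obtain z where z: "\<alpha> z = A" "c*z+d \<le> c*xt+d" using Ap by blast
  have "\<beta> z = c*z+d - l*A" using h[of z] z(1) by simp
  also have "\<dots> \<le> c*xt+d - l*A" using z(2) by simp
  also have "c*xt+d = \<beta> xt + l*\<alpha> xt" using h by simp
  finally have "\<beta> z \<le> B" using hB unfolding l_def \<alpha>_def \<beta>_def by simp
  then show ?thesis using z(1) unfolding \<alpha>_def \<beta>_def by blast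
qed

lemma aff_gen:
  fixes l a1 a2 a3 b2 b3 x y t :: real
  shows "((-l*a1)*((1-t)*x+t*y)^2+b2*((1-t)*x+t*y)+b3) + l*(a1*((1-t)*x+t*y)^2+a2*((1-t)*x+t*y)+a3) \<le>
     ((1-t)*((-l*a1)*x^2+b2*x+b3) + t*((-l*a1)*y^2+b2*y+b3)) + l*((1-t)*(a1*x^2+a2*x+a3) + t*(a1*y^2+a2*y+a3))"
  by (simp add: algebra_simps power2_eq_square)

lemma mixed_comb:
  fixes a1 a2 a3 b1 b2 b3 x y t :: real
  assumes "a1 > 0" "b1 < 0" "0 \<le> t" "t \<le> 1"
  shows "\<exists>z. a1*z^2+a2*z+a3 \<le> (1-t)*(a1*x^2+a2*x+a3) + t*(a1*y^2+a2*y+a3)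
           \<and> b1*z^2+b2*z+b3 \<le> (1-t)*(b1*x^2+b2*x+b3) + t*(b1*y^2+b2*y+b3)"
proof -
  define l where "l = -b1/a1"
  have lb: "b1 = -l*a1" using assms(1) by (simp add: l_def)
  show ?thesis
    apply (rule mixed[where xt="(1-t)*x+t*y"])
    using assms apply simp_all[2]
    using quad_conv[of a1 t x y a2 a3] assms apply simp
    using aff_gen[of l a1 t x y b2 b3 a2 a3] unfolding l_def[symmetric] lb using assms(1) by simp
qed

lemma key:
  fixes a1 a2 a3 b1 b2 b3 x y t :: real
  assumes t: "0 \<le> t" "t \<le> 1"
  shows "\<exists>z. a1*z^2+a2*z+a3 \<le> (1-t)*(a1*x^2+a2*x+a3) + t*(a1*y^2+a2*y+a3)
           \<and> b1*z^2+b2*z+b3 \<le> (1-t)*(b1*x^2+b2*x+b3) + t*(b1*y^2+b2*y+b3)"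
proof -
  define xt where "xt = (1-t)*x+t*y"
  have bx: "b1*x^2+b2*x+b3 \<le> (1-t)*(b1*x^2+b2*x+b3) + t*(b1*y^2+b2*y+b3)
      \<or> b1*y^2+b2*y+b3 \<le> (1-t)*(b1*x^2+b2*x+b3) + t*(b1*y^2+b2*y+b3)" for b1 b2 b3
  proof (cases "b1*x^2+b2*x+b3 \<le> b1*y^2+b2*y+b3")
    case True
    then have "t*(b1*x^2+b2*x+b3) \<le> t*(b1*y^2+b2*y+b3)" using t by (intro mult_left_mono) auto
    then show ?thesis by (simp add: algebra_simps)
  next
    case False
    then have "(1-t)*(b1*y^2+b2*y+b3) \<le> (1-t)*(b1*x^2+b2*x+b3)" using t by (intro mult_left_mono) auto
    then show ?thesis by (simp add: algebra_simps)
  qed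
  have aff: "(b1*xt^2+b2*xt+b3) + l*(a1*xt^2+a2*xt+a3) =
     (1-t)*(b1*x^2+b2*x+b3 + l*(a1*x^2+a2*x+a3)) + t*(b1*y^2+b2*y+b3 + l*(a1*y^2+a2*y+a3))"
    if "b1 = - l * a1" for l a1 a2 a3 b1 b2 b3 :: real
    unfolding xt_def that by (simp add: algebra_simps power2_eq_square)
  consider "a1 \<ge> 0" "b1 \<ge> 0" | "a1 > 0" "b1 < 0" | "a1 < 0" "b1 > 0" | "a1 < 0" "b1 \<le> 0" | "a1 \<le> 0" "b1 < 0"
    by linarith
  then show ?thesis
  proof cases
    case 1
    then show ?thesis using quad_conv[of a1 t x y a2 a3] quad_conv[of b1 t x y b2 b3] t by blast
  next
    case 2
    have lb: "b1 = - (-b1/a1) * a1" using 2 by simp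
    show ?thesis
      using mixed_comb[OF 2 t] .
  next
    case 3
    have lb: "a1 = - (-a1/b1) * b1" using 3 by simp
    have "\<exists>z. b1*z^2+b2*z+b3 \<le> (1-t)*(b1*x^2+b2*x+b3) + t*(b1*y^2+b2*y+b3)
           \<and> a1*z^2+a2*z+a3 \<le> (1-t)*(a1*x^2+a2*x+a3) + t*(a1*y^2+a2*y+a3)"
      using mixed_comb[OF 3(2,1) t] .
    then show ?thesis by blast
  next
    case 4
    show ?thesis using bx[of b1 b2 b3] far[OF 4] by blast
  next
    case 5
    show ?thesis using bx[of a1 a2 a3] far[OF 5(2,1)] by blast
  qed
qed

theorem proposition4p2:
  fixes a1 a2 a3 b1 b2 b3 :: real
  defines "\<alpha> \<equiv> (\<lambda>x::real. a1 * x^2 + a2 * x + a3)"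
      and "\<beta> \<equiv> (\<lambda>x::real. b1 * x^2 + b2 * x + b3)"
  shows "convex {(\<alpha> x + u, \<beta> x + v) | x u v. u \<ge> 0 \<and> v \<ge> 0}"
proof (rule convexI)
  fix p q :: "real \<times> real" and s t :: real
  assume p: "p \<in> {(\<alpha> x + u, \<beta> x + v) | x u v. u \<ge> 0 \<and> v \<ge> 0}"
    and q: "q \<in> {(\<alpha> x + u, \<beta> x + v) | x u v. u \<ge> 0 \<and> v \<ge> 0}"
    and st: "0 \<le> s" "0 \<le> t" "s + t = 1"
  obtain x u v where xp: "p = (\<alpha> x + u, \<beta> x + v)" "u \<ge> 0" "v \<ge> 0" using p by blast
  obtain y u' v' where yq: "q = (\<alpha> y + u', \<beta> y + v')" "u' \<ge> 0" "v' \<ge> 0" using q by blast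
  have s: "s = 1 - t" using st by simp
  obtain z where z: "\<alpha> z \<le> (1-t)*\<alpha> x + t*\<alpha> y" "\<beta> z \<le> (1-t)*\<beta> x + t*\<beta> y"
    using key[of t a1 a2 a3 x y b1 b2 b3] st unfolding \<alpha>_def \<beta>_def by auto
  define U where "U = s*(\<alpha> x + u) + t*(\<alpha> y + u') - \<alpha> z"
  define V where "V = s*(\<beta> x + v) + t*(\<beta> y + v') - \<beta> z"
  have "s*u \<ge> 0" "t*u' \<ge> 0" "s * v \<ge> 0" "t * (v'::real) \<ge> 0" using st xp yq by auto
  then have "U \<ge> 0" "V \<ge> 0" using z unfolding U_def V_def s by (auto simp: algebra_simps)
  moreover have "s *\<^sub>R p + t *\<^sub>R q = (\<alpha> z + U, \<beta> z + V)"
    unfolding U_def V_def xp yq by simp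
  ultimately show "s *\<^sub>R p + t *\<^sub>R q \<in> {(\<alpha> x + u, \<beta> x + v) | x u v. u \<ge> 0 \<and> v \<ge> 0}"
    by blast
qed

end
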